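(* Let $k\ge3$ and let $S'$ be a finite poset having an induced sub-poset isomorphic to the $k$-crown. Then there exists a stochastically monotone generator on $S'$ which is not realizably monotone.
   Context: The $k$-crown is the poset on $2k$ elements $x_1,\dots,x_k,y_1,\dots,y_k$ whose only strict relations are $x_i<y_i$ and $x_i<y_{i-1}$ for $i=1,\dots,k$ (indices modulo $k$). A generator on a finite poset $S$ is a matrix $L$ with $L_{x,y}\ge0$ for $x\ne y$ and rows summing to $0$; $L_{x,\Gamma}=\sum_{z\in\Gamma}L_{x,z}$. $L$ is stochastically monotone iff for every up-set $\Gamma$ and $x\le y\notin\Gamma$, $L_{x,\Gamma}\le L_{y,\Gamma}$, and for every down-set $\Gamma$ and $y\ge x\notin\Gamma$, $L_{x,\Gamma}\ge L_{y,\Gamma}$. $L$ is realizably monotone iff there exists $\Lambda:\mathcal M\to[0,\infty)$, $\mathcal M$ the set of increasing maps $S\to S$, with $L_{x,y}=\sum_{f\in\mathcal M:f(x)=y}\Lambda(f)$ for all $x\ne y$. An induced sub-poset is a subset with the restricted order. *)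

theory Defs
  imports Complex_Main
begin

text \<open>The k-crown: elements Inl i (= x_i) and Inr i (= y_i) for i < k, indices taken
  modulo k (0-based, so y_{i-1} is y_{(i+k-1) mod k}).\<close>

definition crown_set :: "nat \<Rightarrow> (nat + nat) set" where
  "crown_set k = Inl ` {..<k} \<union> Inr ` {..<k}"

definition crown_le :: "nat \<Rightarrow> (nat + nat) \<Rightarrow> (nat + nat) \<Rightarrow> bool" where
  "crown_le k a b \<longleftrightarrow> a = b \<or>
     (\<exists>i<k. a = Inl i \<and> (b = Inr i \<or> b = Inr ((i + k - 1) mod k)))"

definition has_induced_crown :: "nat \<Rightarrow> 'a::order itself \<Rightarrow> bool" where
  "has_induced_crown k _ \<longleftrightarrow>
     (\<exists>\<phi> :: nat + nat \<Rightarrow> 'a. inj_on \<phi> (crown_set k) \<and>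
        (\<forall>a\<in>crown_set k. \<forall>b\<in>crown_set k. (\<phi> a \<le> \<phi> b \<longleftrightarrow> crown_le k a b)))"

definition up_set :: "'a::order set \<Rightarrow> bool" where
  "up_set \<Gamma> \<longleftrightarrow> (\<forall>x y. x \<in> \<Gamma> \<longrightarrow> x \<le> y \<longrightarrow> y \<in> \<Gamma>)"

definition down_set :: "'a::order set \<Rightarrow> bool" where
  "down_set \<Gamma> \<longleftrightarrow> (\<forall>x y. x \<in> \<Gamma> \<longrightarrow> y \<le> x \<longrightarrow> y \<in> \<Gamma>)"

definition rate_to :: "('a \<Rightarrow> 'a \<Rightarrow> real) \<Rightarrow> 'a \<Rightarrow> 'a set \<Rightarrow> real" where
  "rate_to L x \<Gamma> = (\<Sum>z\<in>\<Gamma>. L x z)"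

definition generator :: "('a::finite \<Rightarrow> 'a \<Rightarrow> real) \<Rightarrow> bool" where
  "generator L \<longleftrightarrow> (\<forall>x y. x \<noteq> y \<longrightarrow> L x y \<ge> 0) \<and> (\<forall>x. (\<Sum>y\<in>UNIV. L x y) = 0)"

definition stoch_monotone :: "('a::{finite,order} \<Rightarrow> 'a \<Rightarrow> real) \<Rightarrow> bool" where
  "stoch_monotone L \<longleftrightarrow>
     (\<forall>\<Gamma> x y. up_set \<Gamma> \<longrightarrow> x \<le> y \<longrightarrow> y \<notin> \<Gamma> \<longrightarrow> rate_to L x \<Gamma> \<le> rate_to L y \<Gamma>) \<and>
     (\<forall>\<Gamma> x y. down_set \<Gamma> \<longrightarrow> x \<le> y \<longrightarrow> x \<notin> \<Gamma> \<longrightarrow> rate_to L x \<Gamma> \<ge> rate_to L y \<Gamma>)"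

definition realizably_monotone :: "('a::{finite,order} \<Rightarrow> 'a \<Rightarrow> real) \<Rightarrow> bool" where
  "realizably_monotone L \<longleftrightarrow>
     (\<exists>\<Lambda> :: ('a \<Rightarrow> 'a) \<Rightarrow> real. (\<forall>f. \<Lambda> f \<ge> 0) \<and>
        (\<forall>x y. x \<noteq> y \<longrightarrow> L x y = (\<Sum>f\<in>{f. mono f \<and> f x = y}. \<Lambda> f)))"

end

theory Submission
  imports Defs
begin

lemma mod_pred_aux: "1 \<le> i \<Longrightarrow> i < (k::nat) \<Longrightarrow> (i + k - 1) mod k = i - 1"
  by (metis Nat.add_diff_assoc2 add.commute le_less_trans less_imp_diff_less mod_add_self2 mod_less)

lemma sum_ge_member:
  fixes \<Lambda> :: "'b \<Rightarrow> real"
  assumes "finite A" "f \<in> A" "\<forall>g. \<Lambda> g \<ge> 0"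
  shows "\<Lambda> f \<le> (\<Sum>g\<in>A. \<Lambda> g)"
  using assms by (intro member_le_sum) auto

theorem mainTheorem13:
  fixes k :: nat
  assumes "k \<ge> 3"
    and "has_induced_crown k TYPE('a::{finite,order})"
  shows "\<exists>L :: 'a \<Rightarrow> 'a \<Rightarrow> real. generator L \<and> stoch_monotone L \<and> \<not> realizably_monotone L"
proof -
  from assms(2) obtain \<phi> :: "nat + nat \<Rightarrow> 'a" where
    ord: "\<forall>u\<in>crown_set k. \<forall>v\<in>crown_set k. (\<phi> u \<le> \<phi> v \<longleftrightarrow> crown_le k u v)"
    unfolding has_induced_crown_def by blast
  have ordI: "\<And>u v. u \<in> crown_set k \<Longrightarrow> v \<in> crown_set k \<Longrightarrow> (\<phi> u \<le> \<phi> v \<longleftrightarrow> crown_le k u v)"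
    using ord by blast
  have memL: "\<And>i. i < k \<Longrightarrow> Inl i \<in> crown_set k" by (simp add: crown_set_def)
  have memR: "\<And>i. i < k \<Longrightarrow> Inr i \<in> crown_set k" by (simp add: crown_set_def)
  define X where "X i = \<phi> (Inl i)" for i
  define Y where "Y i = \<phi> (Inr i)" for i
  have XY: "\<And>i. i < k \<Longrightarrow> X i \<le> Y i"
    using ordI[OF memL memR] by (auto simp: X_def Y_def crown_le_def)
  have XYm: "\<And>i. 1 \<le> i \<Longrightarrow> i < k \<Longrightarrow> X i \<le> Y (i - 1)"
  proof -
    fix i assume i: "1 \<le> i" "i < k"
    have "crown_le k (Inl i) (Inr (i - 1))"
      unfolding crown_le_def using i mod_pred_aux[OF i] by auto
    then show "X i \<le> Y (i - 1)" using ordI[OF memL[OF i(2)] memR[of "i - 1"]] i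
      by (simp add: X_def Y_def)
  qed
  have X0Ykm: "X 0 \<le> Y (k - 1)"
  proof -
    have "crown_le k (Inl 0) (Inr (k - 1))"
      unfolding crown_le_def using assms(1) by auto
    then show ?thesis using ordI[OF memL memR] assms(1) by (simp add: X_def Y_def)
  qed
  have nYY: "\<And>i j. i < k \<Longrightarrow> j < k \<Longrightarrow> i \<noteq> j \<Longrightarrow> \<not> Y i \<le> Y j"
    using ordI[OF memR memR] by (auto simp: Y_def crown_le_def)
  have nYX: "\<And>i j. i < k \<Longrightarrow> j < k \<Longrightarrow> \<not> Y i \<le> X j"
    using ordI[OF memR memL] by (auto simp: X_def Y_def crown_le_def)
  have nXX: "\<And>i j. i < k \<Longrightarrow> j < k \<Longrightarrow> i \<noteq> j \<Longrightarrow> \<not> X i \<le> X j"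
    using ordI[OF memL memL] by (auto simp: X_def crown_le_def)
  have nX0Y1: "\<not> X 0 \<le> Y 1"
  proof -
    have "\<not> crown_le k (Inl 0) (Inr 1)"
      unfolding crown_le_def using assms(1) by auto
    then show ?thesis using ordI[OF memL memR] assms(1) by (simp add: X_def Y_def)
  qed
  have nXjY0: "\<And>j. 2 \<le> j \<Longrightarrow> j < k \<Longrightarrow> \<not> X j \<le> Y 0"
  proof -
    fix j :: nat assume j: "2 \<le> j" "j < k"
    have "(j + k - 1) mod k = j - 1" using mod_pred_aux[of j k] j by auto
    then have "\<not> crown_le k (Inl j) (Inr 0)"
      unfolding crown_le_def using j by auto
    then show "\<not> X j \<le> Y 0" using ordI[OF memL memR] j by (simp add: X_def Y_def)
  qed
  have X1Y0: "X 1 \<le> Y 0"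
  proof -
    have "crown_le k (Inl 1) (Inr 0)"
      unfolding crown_le_def using assms(1) by auto
    then show ?thesis using ordI[OF memL memR] assms(1) by (simp add: X_def Y_def)
  qed
  define a where "a = X 0"
  define b where "b = Y 0"
  have k0: "0 < k" "1 < k" using assms(1) by auto
  have ab: "a \<le> b" using XY[OF k0(1)] by (simp add: a_def b_def)
  have nba: "\<not> b \<le> a" using nYX[OF k0(1) k0(1)] by (simp add: a_def b_def)
  have anb: "a \<noteq> b" using ab nba by auto
  define al where "al s = (if s \<le> b \<and> \<not> s \<le> a then 1 else (0::real))" for s
  define be where "be s = (if \<not> s < a \<and> \<not> b \<le> s \<and> (s \<le> b \<longrightarrow> a \<le> s) then 1 else (0::real))" for s
  define L where "L s t = (if t = a then al s else 0) + (if t = b then be s else 0)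
      - (if t = s then al s + be s else 0)" for s t
  have al01: "\<And>s. al s \<ge> 0" and be01: "\<And>s. be s \<ge> 0" by (auto simp: al_def be_def)
  have Loff: "\<And>s t. s \<noteq> t \<Longrightarrow> L s t = (if t = a then al s else 0) + (if t = b then be s else 0)"
    by (simp add: L_def)
  have rate: "\<And>(x::'a) \<Gamma>. x \<notin> \<Gamma> \<Longrightarrow> rate_to L x \<Gamma> = (if a \<in> \<Gamma> then al x else 0) + (if b \<in> \<Gamma> then be x else 0)"
  proof -
    fix x :: 'a and \<Gamma> assume x: "x \<notin> \<Gamma>"
    have "rate_to L x \<Gamma> = (\<Sum>z\<in>\<Gamma>. (if z = a then al x else 0) + (if z = b then be x else 0))"
      unfolding rate_to_def
      by (rule sum.cong[OF refl], rule Loff) (use x in blast)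
    also have "\<dots> = (if a \<in> \<Gamma> then al x else 0) + (if b \<in> \<Gamma> then be x else 0)"
      by (simp add: sum.distrib)
    finally show "rate_to L x \<Gamma> = (if a \<in> \<Gamma> then al x else 0) + (if b \<in> \<Gamma> then be x else 0)" .
  qed
  have gen: "generator L"
    unfolding generator_def
  proof (intro conjI allI impI)
    fix x y :: 'a assume "x \<noteq> y"
    then show "L x y \<ge> 0" using al01 be01 by (simp add: Loff)
  next
    fix x :: 'a
    show "(\<Sum>y\<in>UNIV. L x y) = 0"
      unfolding L_def by (simp add: sum.distrib sum_subtractf)
  qed
  have mono_part: "stoch_monotone L"
    unfolding stoch_monotone_def
  proof (intro conjI allI impI)
    fix \<Gamma> and x y :: 'a
    assume up: "up_set \<Gamma>" and xy: "x \<le> y" and yG: "y \<notin> \<Gamma>"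
    have xG: "x \<notin> \<Gamma>" using up xy yG unfolding up_set_def by blast
    show "rate_to L x \<Gamma> \<le> rate_to L y \<Gamma>"
    proof (cases "a \<in> \<Gamma>")
      case True
      then have bG: "b \<in> \<Gamma>" using up ab unfolding up_set_def by blast
      have nay: "\<not> a \<le> y" using True up yG unfolding up_set_def by blast
      have nax: "\<not> a \<le> x" using nay xy order_trans by blast
      have "al x + be x \<le> al y + be y"
        using nay nax xy ab unfolding al_def be_def
        by (auto dest: order_trans less_imp_le)
      then show ?thesis using rate[OF xG] rate[OF yG] True bG by simp
    next
      case False
      show ?thesis
      proof (cases "b \<in> \<Gamma>")
        case True
        have nby: "\<not> b \<le> y" using True up yG unfolding up_set_def by blast
        have "be x \<le> be y"
          using nby xy unfolding be_def
          by (auto dest: order_trans le_less_trans)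
        then show ?thesis using rate[OF xG] rate[OF yG] True False by simp
      next
        case False2: False
        then show ?thesis using rate[OF xG] rate[OF yG] False by simp
      qed
    qed
  next
    fix \<Gamma> and x y :: 'a
    assume dn: "down_set \<Gamma>" and xy: "x \<le> y" and xG: "x \<notin> \<Gamma>"
    have yG: "y \<notin> \<Gamma>" using dn xy xG unfolding down_set_def by blast
    show "rate_to L x \<Gamma> \<ge> rate_to L y \<Gamma>"
    proof (cases "b \<in> \<Gamma>")
      case True
      then have aG: "a \<in> \<Gamma>" using dn ab unfolding down_set_def by blast
      have nxb: "\<not> x \<le> b" using True dn xG unfolding down_set_def by blast
      have "al x + be x \<ge> al y + be y"
        using nxb xy ab unfolding al_def be_def
        by (auto dest: order_trans less_imp_le)
      then show ?thesis using rate[OF xG] rate[OF yG] True aG by simp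
    next
      case False
      show ?thesis
      proof (cases "a \<in> \<Gamma>")
        case True
        have nxa: "\<not> x \<le> a" using True dn xG unfolding down_set_def by blast
        have "al x \<ge> al y"
          using nxa xy unfolding al_def
          by (auto dest: order_trans)
        then show ?thesis using rate[OF xG] rate[OF yG] True False by simp
      next
        case False2: False
        then show ?thesis using rate[OF xG] rate[OF yG] False by simp
      qed
    qed
  qed
  have nreal: "\<not> realizably_monotone L"
  proof
    assume "realizably_monotone L"
    then obtain \<Lambda> :: "('a \<Rightarrow> 'a) \<Rightarrow> real" where
      pos: "\<forall>f. \<Lambda> f \<ge> 0" and
      rep: "\<forall>x y. x \<noteq> y \<longrightarrow> L x y = (\<Sum>f\<in>{f. mono f \<and> f x = y}. \<Lambda> f)"
      unfolding realizably_monotone_def by blast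
    have good: "\<And>f p. mono f \<Longrightarrow> \<Lambda> f > 0 \<Longrightarrow>
        f p = p \<or> (f p = a \<and> p \<le> b \<and> \<not> p \<le> a) \<or> (f p = b \<and> be p = 1)"
    proof -
      fix f p assume mf: "mono f" and lp: "\<Lambda> f > 0"
      show "f p = p \<or> (f p = a \<and> p \<le> b \<and> \<not> p \<le> a) \<or> (f p = b \<and> be p = 1)"
      proof (cases "f p = p")
        case False
        have "\<Lambda> f \<le> (\<Sum>g\<in>{g. mono g \<and> g p = f p}. \<Lambda> g)"
          by (rule sum_ge_member) (use mf pos in auto)
        also have "\<dots> = L p (f p)" using rep False by metis
        finally have "L p (f p) > 0" using lp by linarith
        then show ?thesis using False anb unfolding Loff[OF False[symmetric]] al_def be_def
          by (auto split: if_splits)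
      qed simp
    qed
    have up_b: "\<And>f p. mono f \<Longrightarrow> \<Lambda> f > 0 \<Longrightarrow> b \<le> f p \<Longrightarrow> \<not> b \<le> p \<Longrightarrow> f p = b"
    proof -
      fix f p assume "mono f" "\<Lambda> f > 0" "b \<le> f p" "\<not> b \<le> p"
      then show "f p = b" using good[of f p] nba by auto
    qed
    have dn_b: "\<And>f p. mono f \<Longrightarrow> \<Lambda> f > 0 \<Longrightarrow> f p \<le> b \<Longrightarrow> \<not> p \<le> b \<Longrightarrow> f p = b"
    proof -
      fix f p assume "mono f" "\<Lambda> f > 0" "f p \<le> b" "\<not> p \<le> b"
      then show "f p = b" using good[of f p] by auto
    qed
    define F1 where "F1 = {f. mono f \<and> f b = a}"
    define F2 where "F2 = {f. mono f \<and> f a = b}"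
    define G where "G = {f. mono f \<and> f (Y 1) = b}"
    have y1b: "Y 1 \<noteq> b" using nYY[OF k0(2) k0(1)] by (auto simp: b_def)
    have sF1: "sum \<Lambda> F1 = 1"
    proof -
      have "L b a = sum \<Lambda> F1" using rep anb unfolding F1_def by metis
      moreover have "L b a = 1" using anb nba by (simp add: Loff al_def)
      ultimately show ?thesis by simp
    qed
    have sF2: "sum \<Lambda> F2 = 1"
    proof -
      have "L a b = sum \<Lambda> F2" using rep anb unfolding F2_def by metis
      moreover have "L a b = 1" using anb nba ab by (simp add: Loff be_def)
      ultimately show ?thesis by simp
    qed
    have sG: "sum \<Lambda> G = 1"
    proof -
      have "L (Y 1) b = sum \<Lambda> G" using rep y1b unfolding G_def by metis
      moreover have "be (Y 1) = 1"
        using nYX[OF k0(2) k0(1)] nYY[OF k0(1) k0(2)] nYY[OF k0(2) k0(1)]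
        unfolding be_def a_def b_def by (auto simp: less_le)
      moreover have "L (Y 1) b = be (Y 1)" using y1b anb by (simp add: Loff)
      ultimately show ?thesis by simp
    qed
    have disj: "F1 \<inter> F2 = {}"
    proof (rule ccontr)
      assume "F1 \<inter> F2 \<noteq> {}"
      then obtain f where "mono f" "f b = a" "f a = b" unfolding F1_def F2_def by blast
      then have "b \<le> a" using ab by (metis monoD)
      then show False using nba by simp
    qed
    have F1G: "\<And>f. f \<in> F1 \<Longrightarrow> \<Lambda> f > 0 \<Longrightarrow> f \<in> G"
    proof -
      fix f assume fF: "f \<in> F1" and lp: "\<Lambda> f > 0"
      have mf: "mono f" and fb: "f b = a" using fF by (auto simp: F1_def)
      have "f (X 1) \<le> a" using monoD[OF mf X1Y0] fb by (simp add: b_def)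
      moreover have "\<not> X 1 \<le> a" using nXX[OF k0(2) k0(1)] by (simp add: a_def)
      ultimately have fx1: "f (X 1) = a" using good[OF mf lp, of "X 1"] nba by auto
      have "a \<le> f (Y 1)" using monoD[OF mf XY[OF k0(2)]] fx1 by simp
      moreover have "\<not> a \<le> Y 1" using nX0Y1 by (simp add: a_def)
      moreover have "\<not> Y 1 \<le> b" using nYY[OF k0(2) k0(1)] by (simp add: b_def)
      ultimately have "f (Y 1) = b" using good[OF mf lp, of "Y 1"] by auto
      then show "f \<in> G" using mf by (simp add: G_def)
    qed
    have F2G: "\<And>f. f \<in> F2 \<Longrightarrow> \<Lambda> f > 0 \<Longrightarrow> f \<in> G"
    proof -
      fix f assume fF: "f \<in> F2" and lp: "\<Lambda> f > 0"
      have mf: "mono f" and fa: "f a = b" using fF by (auto simp: F2_def)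
      have nbY: "\<And>j. 1 \<le> j \<Longrightarrow> j < k \<Longrightarrow> \<not> b \<le> Y j"
        using nYY by (auto simp: b_def)
      have base: "f (Y (k - 1)) = b"
      proof (rule up_b[OF mf lp])
        show "b \<le> f (Y (k - 1))" using monoD[OF mf X0Ykm] fa by (simp add: a_def)
        show "\<not> b \<le> Y (k - 1)" using nbY[of "k - 1"] assms(1) by auto
      qed
      have "f (Y 1) = b"
      proof (rule inc_induct[of 1 "k - 1"])
        show "1 \<le> k - 1" using assms(1) by auto
        show "f (Y (k - 1)) = b" by (rule base)
      next
        fix n assume n: "1 \<le> n" "n < k - 1" and IH: "f (Y (Suc n)) = b"
        have sk: "Suc n < k" using n by auto
        have "f (X (Suc n)) \<le> b" using monoD[OF mf XY[OF sk]] IH by simp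
        moreover have "\<not> X (Suc n) \<le> b" using nXjY0[of "Suc n"] n sk by (simp add: b_def)
        ultimately have fx: "f (X (Suc n)) = b" using dn_b[OF mf lp] by blast
        have "b \<le> f (Y n)" using monoD[OF mf XYm[of "Suc n"]] fx sk by simp
        moreover have "\<not> b \<le> Y n" using nbY n by auto
        ultimately show "f (Y n) = b" using up_b[OF mf lp] by blast
      qed
      then show "f \<in> G" using mf by (simp add: G_def)
    qed
    have fin: "finite (A :: ('a \<Rightarrow> 'a) set)" for A by simp
    have "sum \<Lambda> F1 + sum \<Lambda> F2 = sum \<Lambda> (F1 \<union> F2)"
      using disj by (simp add: sum.union_disjoint)
    also have "\<dots> = sum \<Lambda> ((F1 \<union> F2) \<inter> {f. \<Lambda> f > 0})"
    proof (rule sum.mono_neutral_right)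
      show "finite (F1 \<union> F2)" by simp
      show "(F1 \<union> F2) \<inter> {f. \<Lambda> f > 0} \<subseteq> F1 \<union> F2" by blast
      show "\<forall>i\<in>(F1 \<union> F2) - (F1 \<union> F2) \<inter> {f. \<Lambda> f > 0}. \<Lambda> i = 0"
      proof
        fix i assume "i \<in> (F1 \<union> F2) - (F1 \<union> F2) \<inter> {f. \<Lambda> f > 0}"
        then have "\<not> \<Lambda> i > 0" by blast
        moreover have "\<Lambda> i \<ge> 0" using pos by blast
        ultimately show "\<Lambda> i = 0" by linarith
      qed
    qed
    also have "\<dots> \<le> sum \<Lambda> G"
    proof (rule sum_mono2)
      show "finite G" by simp
      show "(F1 \<union> F2) \<inter> {f. \<Lambda> f > 0} \<subseteq> G" using F1G F2G by blast
      show "\<And>b. b \<in> G - (F1 \<union> F2) \<inter> {f. \<Lambda> f > 0} \<Longrightarrow> 0 \<le> \<Lambda> b" using pos by blast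
    qed
    finally have "2 \<le> (1::real)" using sF1 sF2 sG by simp
    then show False by simp
  qed
  show ?thesis using gen mono_part nreal by blast
qed

end
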